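(* Let $X$ be an exponential vector space over $\mathbb K$ and $V$ a vector space over $\mathbb K$. Then the evs $X\times V$ has a basis if and only if $X$ has a basis. Moreover (when these bases exist) $\dim(X\times V)=[\dim(X\smallsetminus X_0):\dim X_0+\dim V]$.
   Context: $\mathbb K$ is $\mathbb R$ or $\mathbb C$. An exponential vector space (evs) over a field $K$ is a partially ordered set $(X,\leq)$ with a binary operation $+$ on $X$ and a map $K\times X\to X$, $(\alpha,x)\mapsto \alpha x$, such that: (A1) $(X,+)$ is a commutative semigroup with identity $\theta$; (A2) $x\leq y$ implies $x+z\leq y+z$ and $\alpha x\leq \alpha y$ for all $z\in X$, $\alpha\in K$; (A3) $\alpha(x+y)=\alpha x+\alpha y$, $\alpha(\beta x)=(\alpha\beta)x$, $(\alpha+\beta)x\leq \alpha x+\beta x$, $1x=x$; (A4) $\alpha x=\theta$ iff $\alpha=0$ or $x=\theta$; (A5) $x+(-1)x=\theta$ iff $x\in X_0$, where $X_0:=\{z\in X: y\not\leq z \text{ for all } y\in X\smallsetminus\{z\}\}$ (the set of minimal elements, called the primitive space; it is a vector space over $K$); (A6) for each $x\in X$ there is $p\in X_0$ with $p\leq x$. For $x\in X\smallsetminus X_0$ let $L(x):=\{z\in X: z\geq \alpha x+p \text{ for some } \alpha\in K\smallsetminus\{0\},\ p\in X_0\}$. A subset $B\subseteq X\smallsetminus X_0$ generates $X\smallsetminus X_0$ if $X\smallsetminus X_0=\bigcup_{b\in B}L(b)$. Elements $x,y\in X\smallsetminus X_0$ are orderly dependent if $x\in L(y)$ or $y\in L(x)$,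 and orderly independent otherwise; $B$ is orderly independent if any two distinct members are orderly independent. A basis of $X\smallsetminus X_0$ is an orderly independent generating subset of $X\smallsetminus X_0$; "$X$ has a basis" means $X\smallsetminus X_0$ has a basis. All bases of $X\smallsetminus X_0$ have the same cardinality, denoted $\dim(X\smallsetminus X_0)$; $\dim X_0$ is the vector-space dimension of $X_0$ (taken as $0$ if $X_0=\{\theta\}$), and $\dim X:=[\dim(X\smallsetminus X_0):\dim X_0]$. The evs $X\times V$ has operations $(x_1,e_1)+(x_2,e_2)=(x_1+x_2,e_1+e_2)$, $\alpha(x,e)=(\alpha x,\alpha e)$, and order $(x_1,e_1)\leq(x_2,e_2)$ iff $x_1\leq x_2$ and $e_1=e_2$; its primitive space is $X_0\times V$. *)

theory Defs
  imports Complex_Main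
begin

text \<open>An exponential vector space (evs) over a field 'k is encoded on a carrier type 'x
  (the whole type is the carrier) by an order relation le, addition add with
  identity th, and scalar multiplication sm.\<close>

definition prim :: "('x \<Rightarrow> 'x \<Rightarrow> bool) \<Rightarrow> 'x set" where
  "prim le = {z. \<forall>y. y \<noteq> z \<longrightarrow> \<not> le y z}"

definition evs :: "('x \<Rightarrow> 'x \<Rightarrow> bool) \<Rightarrow> ('x \<Rightarrow> 'x \<Rightarrow> 'x) \<Rightarrow> 'x
    \<Rightarrow> ('k::field \<Rightarrow> 'x \<Rightarrow> 'x) \<Rightarrow> bool" where
  "evs le add th sm \<longleftrightarrow>
     \<comment> \<open>partial order\<close>
     reflp le \<and> transp le \<and> antisymp le \<and>
     \<comment> \<open>(A1)\<close>
     comm_monoid add th \<and>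
     \<comment> \<open>(A2)\<close>
     (\<forall>x y z. le x y \<longrightarrow> le (add x z) (add y z)) \<and>
     (\<forall>x y a. le x y \<longrightarrow> le (sm a x) (sm a y)) \<and>
     \<comment> \<open>(A3)\<close>
     (\<forall>a x y. sm a (add x y) = add (sm a x) (sm a y)) \<and>
     (\<forall>a b x. sm a (sm b x) = sm (a * b) x) \<and>
     (\<forall>a b x. le (sm (a + b) x) (add (sm a x) (sm b x))) \<and>
     (\<forall>x. sm 1 x = x) \<and>
     \<comment> \<open>(A4)\<close>
     (\<forall>a x. sm a x = th \<longleftrightarrow> a = 0 \<or> x = th) \<and>
     \<comment> \<open>(A5)\<close>
     (\<forall>x. add x (sm (-1) x) = th \<longleftrightarrow> x \<in> prim le) \<and>
     \<comment> \<open>(A6)\<close>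
     (\<forall>x. \<exists>p \<in> prim le. le p x)"

definition Lset :: "('x \<Rightarrow> 'x \<Rightarrow> bool) \<Rightarrow> ('x \<Rightarrow> 'x \<Rightarrow> 'x) \<Rightarrow> ('k::field \<Rightarrow> 'x \<Rightarrow> 'x)
    \<Rightarrow> 'x \<Rightarrow> 'x set" where
  "Lset le add sm x = {z. \<exists>a p. a \<noteq> 0 \<and> p \<in> prim le \<and> le (add (sm a x) p) z}"

definition orderly_independent_set ::
    "('x \<Rightarrow> 'x \<Rightarrow> bool) \<Rightarrow> ('x \<Rightarrow> 'x \<Rightarrow> 'x) \<Rightarrow> ('k::field \<Rightarrow> 'x \<Rightarrow> 'x) \<Rightarrow> 'x set \<Rightarrow> bool" where
  "orderly_independent_set le add sm B \<longleftrightarrow>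
     (\<forall>x\<in>B. \<forall>y\<in>B. x \<noteq> y \<longrightarrow> \<not> (x \<in> Lset le add sm y \<or> y \<in> Lset le add sm x))"

definition generates ::
    "('x \<Rightarrow> 'x \<Rightarrow> bool) \<Rightarrow> ('x \<Rightarrow> 'x \<Rightarrow> 'x) \<Rightarrow> ('k::field \<Rightarrow> 'x \<Rightarrow> 'x) \<Rightarrow> 'x set \<Rightarrow> bool" where
  "generates le add sm B \<longleftrightarrow>
     B \<subseteq> - prim le \<and> - prim le = (\<Union>b\<in>B. Lset le add sm b)"

definition evs_basis ::
    "('x \<Rightarrow> 'x \<Rightarrow> bool) \<Rightarrow> ('x \<Rightarrow> 'x \<Rightarrow> 'x) \<Rightarrow> ('k::field \<Rightarrow> 'x \<Rightarrow> 'x) \<Rightarrow> 'x set \<Rightarrow> bool" where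
  "evs_basis le add sm B \<longleftrightarrow> orderly_independent_set le add sm B \<and> generates le add sm B"

definition has_basis ::
    "('x \<Rightarrow> 'x \<Rightarrow> bool) \<Rightarrow> ('x \<Rightarrow> 'x \<Rightarrow> 'x) \<Rightarrow> ('k::field \<Rightarrow> 'x \<Rightarrow> 'x) \<Rightarrow> bool" where
  "has_basis le add sm \<longleftrightarrow> (\<exists>B. evs_basis le add sm B)"

definition esum :: "('x \<Rightarrow> 'x \<Rightarrow> 'x) \<Rightarrow> 'x \<Rightarrow> ('b \<Rightarrow> 'x) \<Rightarrow> 'b set \<Rightarrow> 'x" where
  "esum add th = comm_monoid_set.F add th"

definition prim_basis ::
    "('x \<Rightarrow> 'x \<Rightarrow> bool) \<Rightarrow> ('x \<Rightarrow> 'x \<Rightarrow> 'x) \<Rightarrow> 'x \<Rightarrow> ('k::field \<Rightarrow> 'x \<Rightarrow> 'x) \<Rightarrow> 'x set \<Rightarrow> bool" where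
  "prim_basis le add th sm D \<longleftrightarrow>
     D \<subseteq> prim le \<and>
     (\<forall>F c. finite F \<longrightarrow> F \<subseteq> D \<longrightarrow> esum add th (\<lambda>d. sm (c d) d) F = th \<longrightarrow> (\<forall>d\<in>F. c d = 0)) \<and>
     (\<forall>x\<in>prim le. \<exists>F c. finite F \<and> F \<subseteq> D \<and> x = esum add th (\<lambda>d. sm (c d) d) F)"

definition prod_le :: "('x \<Rightarrow> 'x \<Rightarrow> bool) \<Rightarrow> 'x \<times> 'v \<Rightarrow> 'x \<times> 'v \<Rightarrow> bool" where
  "prod_le le p q \<longleftrightarrow> le (fst p) (fst q) \<and> snd p = snd q"

definition prod_add :: "('x \<Rightarrow> 'x \<Rightarrow> 'x) \<Rightarrow> 'x \<times> 'v::ab_group_add \<Rightarrow> 'x \<times> 'v \<Rightarrow> 'x \<times> 'v" where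
  "prod_add add p q = (add (fst p) (fst q), snd p + snd q)"

definition prod_sm :: "('k \<Rightarrow> 'x \<Rightarrow> 'x) \<Rightarrow> ('k \<Rightarrow> 'v \<Rightarrow> 'v) \<Rightarrow> 'k \<Rightarrow> 'x \<times> 'v \<Rightarrow> 'x \<times> 'v" where
  "prod_sm sm scale a p = (sm a (fst p), scale a (snd p))"

definition thm8_conclusion ::
    "('x \<Rightarrow> 'x \<Rightarrow> bool) \<Rightarrow> ('x \<Rightarrow> 'x \<Rightarrow> 'x) \<Rightarrow> 'x \<Rightarrow> ('k::field \<Rightarrow> 'x \<Rightarrow> 'x)
     \<Rightarrow> ('k \<Rightarrow> 'v::ab_group_add \<Rightarrow> 'v) \<Rightarrow> bool" where
  "thm8_conclusion le add th sm scale \<longleftrightarrow>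
     (has_basis (prod_le le) (prod_add add) (prod_sm sm scale) \<longleftrightarrow> has_basis le add sm) \<and>
     \<comment> \<open>dim of the non-primitive parts agree\<close>
     (\<forall>B B'. evs_basis (prod_le le) (prod_add add) (prod_sm sm scale) B \<longrightarrow>
             evs_basis le add sm B' \<longrightarrow> (card_of B, card_of B') \<in> ordIso) \<and>
     \<comment> \<open>dim (X0 \<times> V) = dim X0 + dim V\<close>
     (\<forall>C D E. prim_basis (prod_le le) (prod_add add) (th, 0) (prod_sm sm scale) C \<longrightarrow>
             prim_basis le add th sm D \<longrightarrow>
             \<not> module.dependent scale E \<longrightarrow> module.span scale E = UNIV \<longrightarrow>
             (card_of C, BNF_Cardinal_Arithmetic.csum (card_of D) (card_of E)) \<in> ordIso)"

end

theory Submission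
  imports Defs "HOL-Library.Function_Algebras"
begin


locale evsl =
  fixes le :: "'x \<Rightarrow> 'x \<Rightarrow> bool" and add :: "'x \<Rightarrow> 'x \<Rightarrow> 'x" and th :: 'x
    and sm :: "'k::field \<Rightarrow> 'x \<Rightarrow> 'x"
  assumes E: "evs le add th sm"
begin

lemma refl: "le x x" using E unfolding evs_def reflp_on_def by auto
lemma trans: "le x y \<Longrightarrow> le y z \<Longrightarrow> le x z" using E unfolding evs_def transp_def by auto
lemma cm: "comm_monoid add th" using E unfolding evs_def by blast
lemma mono_add: "le x y \<Longrightarrow> le (add x z) (add y z)" using E unfolding evs_def by blast
lemma mono_sm: "le x y \<Longrightarrow> le (sm a x) (sm a y)" using E unfolding evs_def by blast
lemma sm_add: "sm a (add x y) = add (sm a x) (sm a y)" using E unfolding evs_def by blast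
lemma sm_sm: "sm a (sm b x) = sm (a * b) x" using E unfolding evs_def by blast
lemma sm_distr: "le (sm (a + b) x) (add (sm a x) (sm b x))" using E unfolding evs_def by blast
lemma sm_one: "sm 1 x = x" using E unfolding evs_def by blast
lemma sm_th: "sm a x = th \<longleftrightarrow> a = 0 \<or> x = th" using E unfolding evs_def by blast
lemma A5: "add x (sm (-1) x) = th \<longleftrightarrow> x \<in> prim le" using E unfolding evs_def by blast

interpretation M: comm_monoid add th by (rule cm)

lemma add_th[simp]: "add x th = x" "add th x = x" using M.right_neutral M.left_neutral by auto
lemma add_ac: "add (add x y) z = add x (add y z)" "add x y = add y x" "add x (add y z) = add y (add x z)"
  using M.assoc M.commute M.left_commute by auto

lemma prim_min: "p \<in> prim le \<Longrightarrow> le y p \<Longrightarrow> y = p" unfolding prim_def by blast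

lemma th_prim: "th \<in> prim le"
  using A5[of th] sm_th by auto

lemma add_prim: "p \<in> prim le \<Longrightarrow> q \<in> prim le \<Longrightarrow> add p q \<in> prim le"
proof -
  assume p: "p \<in> prim le" and q: "q \<in> prim le"
  have "add (add p q) (sm (-1) (add p q)) = add (add p (sm (-1) p)) (add q (sm (-1) q))"
    by (simp add: sm_add add_ac)
  also have "\<dots> = th" using p q A5[of p] A5[of q] by simp
  finally show ?thesis using A5 by blast
qed

lemma sm_prim: "p \<in> prim le \<Longrightarrow> sm a p \<in> prim le"
proof -
  assume p: "p \<in> prim le"
  have "sm (-1) (sm a p) = sm a (sm (-1) p)" by (simp add: sm_sm mult.commute)
  hence "add (sm a p) (sm (-1) (sm a p)) = sm a (add p (sm (-1) p))" by (simp add: sm_add)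
  also have "\<dots> = th" using p A5 sm_th by simp
  finally show ?thesis using A5 by blast
qed

lemma sm_distr_prim: "p \<in> prim le \<Longrightarrow> sm (a + b) p = add (sm a p) (sm b p)"
  using prim_min[OF add_prim[OF sm_prim sm_prim] sm_distr] by blast

lemma L_trans: "x \<in> Lset le add sm y \<Longrightarrow> z \<in> Lset le add sm x \<Longrightarrow> z \<in> Lset le add sm y"
proof -
  assume "x \<in> Lset le add sm y" "z \<in> Lset le add sm x"
  then obtain a p b q where a: "a \<noteq> 0" "p \<in> prim le" "le (add (sm a y) p) x"
    and b: "b \<noteq> 0" "q \<in> prim le" "le (add (sm b x) q) z"
    unfolding Lset_def by blast
  have "le (sm b (add (sm a y) p)) (sm b x)" using mono_sm a(3) .
  hence "le (add (sm b (add (sm a y) p)) q) (add (sm b x) q)" using mono_add by blast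
  hence 1: "le (add (sm b (add (sm a y) p)) q) z" using trans b(3) by blast
  have "add (sm b (add (sm a y) p)) q = add (add (sm (b * a) y) (sm b p)) q"
    by (simp only: sm_add sm_sm)
  also have "\<dots> = add (sm (b * a) y) (add (sm b p) q)" by (rule add_ac(1))
  finally have 2: "le (add (sm (b * a) y) (add (sm b p) q)) z" using 1 by simp
  have 3: "b * a \<noteq> 0" using a b by simp
  have 4: "add (sm b p) q \<in> prim le" using add_prim sm_prim a b by blast
  show ?thesis unfolding Lset_def using 2 3 4 by blast
qed

lemma L_self: "x \<in> Lset le add sm x"
proof -
  have "le (add (sm 1 x) th) x" using refl[of x] by (simp add: sm_one)
  thus ?thesis unfolding Lset_def using th_prim by (intro CollectI exI[of _ 1] exI[of _ th]) simp
qed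

lemma basis_bij:
  assumes B1: "evs_basis le add sm B1" and B2: "evs_basis le add sm B2"
  shows "\<exists>f. bij_betw f B1 B2"
proof -
  have g1: "\<forall>b\<in>B1. \<exists>c\<in>B2. b \<in> Lset le add sm c"
    using B1 B2 unfolding evs_basis_def generates_def by blast
  have g2: "\<forall>b\<in>B2. \<exists>c\<in>B1. b \<in> Lset le add sm c"
    using B1 B2 unfolding evs_basis_def generates_def by blast
  obtain f where f: "\<forall>b\<in>B1. f b \<in> B2 \<and> b \<in> Lset le add sm (f b)" using g1 by metis
  obtain g where g: "\<forall>b\<in>B2. g b \<in> B1 \<and> b \<in> Lset le add sm (g b)" using g2 by metis
  have i1: "orderly_independent_set le add sm B1" and i2: "orderly_independent_set le add sm B2"
    using B1 B2 unfolding evs_basis_def by auto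
  have "\<forall>b\<in>B1. g (f b) = b"
  proof
    fix b assume b: "b \<in> B1"
    have "b \<in> Lset le add sm (g (f b))" using L_trans f g b by blast
    thus "g (f b) = b" using i1 b f g unfolding orderly_independent_set_def by blast
  qed
  moreover have "\<forall>b\<in>B2. f (g b) = b"
  proof
    fix b assume b: "b \<in> B2"
    have "b \<in> Lset le add sm (f (g b))" using L_trans f g b by blast
    thus "f (g b) = b" using i2 b f g unfolding orderly_independent_set_def by blast
  qed
  ultimately show ?thesis using f g by (intro exI bij_betw_byWitness[where f'=g]) auto
qed

end

lemma prim_prod: "prim (prod_le le) = prim le \<times> UNIV"
  unfolding prim_def prod_le_def by (auto; blast)

lemma Lset_prod:
  fixes scale :: "'k::field \<Rightarrow> 'v::ab_group_add \<Rightarrow> 'v"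
  shows "Lset (prod_le le) (prod_add add) (prod_sm sm scale) (x, v) = Lset le add sm x \<times> UNIV"
proof -
  have "(z, w) \<in> Lset (prod_le le) (prod_add add) (prod_sm sm scale) (x, v) \<longleftrightarrow> z \<in> Lset le add sm x" for z w
  proof
    assume "(z, w) \<in> Lset (prod_le le) (prod_add add) (prod_sm sm scale) (x, v)"
    then show "z \<in> Lset le add sm x"
      unfolding Lset_def prim_prod prod_le_def prod_add_def prod_sm_def by auto
  next
    assume "z \<in> Lset le add sm x"
    then obtain a p where "a \<noteq> 0" "p \<in> prim le" "le (add (sm a x) p) z" unfolding Lset_def by blast
    then show "(z, w) \<in> Lset (prod_le le) (prod_add add) (prod_sm sm scale) (x, v)"
      unfolding Lset_def prim_prod prod_le_def prod_add_def prod_sm_def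
      by (intro CollectI exI[of _ a] exI[of _ "(p, w - scale a v)"]) auto
  qed
  thus ?thesis by auto
qed



lemma vs_fun: "vector_space (\<lambda>(c::'k::field) (f::'a \<Rightarrow> 'k) x. c * f x)"
  by unfold_locales (auto simp: fun_eq_iff algebra_simps)

locale cvs =
  fixes S :: "'a set" and add :: "'a \<Rightarrow> 'a \<Rightarrow> 'a" and z :: 'a
    and sm :: "'k::field \<Rightarrow> 'a \<Rightarrow> 'a"
  assumes cm: "comm_monoid add z"
    and add_S: "x \<in> S \<Longrightarrow> y \<in> S \<Longrightarrow> add x y \<in> S"
    and sm_S: "x \<in> S \<Longrightarrow> sm a x \<in> S"
    and z_S: "z \<in> S"
    and sm_add: "x \<in> S \<Longrightarrow> y \<in> S \<Longrightarrow> sm a (add x y) = add (sm a x) (sm a y)"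
    and sm_sm: "x \<in> S \<Longrightarrow> sm a (sm b x) = sm (a * b) x"
    and add_sm: "x \<in> S \<Longrightarrow> sm (a + b) x = add (sm a x) (sm b x)"
    and sm_one: "x \<in> S \<Longrightarrow> sm 1 x = x"
    and sm_zero: "x \<in> S \<Longrightarrow> sm 0 x = z"
begin

interpretation M: comm_monoid_set add z using cm by (simp add: comm_monoid_set_def)

lemma esum_eq: "esum add z = M.F" by (simp add: esum_def)

definition bas :: "'a set \<Rightarrow> bool" where
  "bas B \<longleftrightarrow> B \<subseteq> S \<and>
     (\<forall>F c. finite F \<longrightarrow> F \<subseteq> B \<longrightarrow> esum add z (\<lambda>d. sm (c d) d) F = z \<longrightarrow> (\<forall>d\<in>F. c d = 0)) \<and>
     (\<forall>x\<in>S. \<exists>F c. finite F \<and> F \<subseteq> B \<and> x = esum add z (\<lambda>d. sm (c d) d) F)"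

lemma F_S: "(\<And>x. x \<in> A \<Longrightarrow> f x \<in> S) \<Longrightarrow> M.F f A \<in> S"
proof (cases "finite A")
  case True
  then show "(\<And>x. x \<in> A \<Longrightarrow> f x \<in> S) \<Longrightarrow> M.F f A \<in> S"
    by (induction A rule: finite_induct) (auto simp: z_S add_S)
qed (simp add: z_S)

lemma sm_z: "sm a z = z"
  using sm_zero[OF z_S] sm_sm[OF z_S, of a 0] by simp

lemma sm_F: "(\<And>x. x \<in> A \<Longrightarrow> f x \<in> S) \<Longrightarrow> sm a (M.F f A) = M.F (\<lambda>x. sm a (f x)) A"
proof (cases "finite A")
  case True
  then show "(\<And>x. x \<in> A \<Longrightarrow> f x \<in> S) \<Longrightarrow> sm a (M.F f A) = M.F (\<lambda>x. sm a (f x)) A"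
    by (induction A rule: finite_induct) (auto simp: sm_z sm_add F_S)
qed (simp add: sm_z)

lemma neg: "x \<in> S \<Longrightarrow> add x (sm (-1) x) = z"
  using add_sm[of x 1 "-1"] sm_one sm_zero by simp

lemma lc_S: "A \<subseteq> S \<Longrightarrow> M.F (\<lambda>d. sm (c d) d) A \<in> S"
  by (rule F_S) (auto intro: sm_S)

end

locale cvsb = cvs S add z sm for S :: "'a set" and add :: "'a \<Rightarrow> 'a \<Rightarrow> 'a" and z :: 'a
    and sm :: "'k::field \<Rightarrow> 'a \<Rightarrow> 'a" +
  fixes B1 assumes B1: "bas B1"
begin

interpretation M: comm_monoid_set add z using cm by (simp add: comm_monoid_set_def)
interpretation W: vector_space "\<lambda>(c::'k::field) (f::'a \<Rightarrow> 'k) x. c * f x" by (rule vs_fun)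

lemma B1S: "B1 \<subseteq> S" using B1 unfolding bas_def by blast
lemma B1ind: "finite F \<Longrightarrow> F \<subseteq> B1 \<Longrightarrow> M.F (\<lambda>d. sm (c d) d) F = z \<Longrightarrow> d \<in> F \<Longrightarrow> c d = 0"
  using B1 unfolding bas_def esum_eq by blast
lemma B1span: "x \<in> S \<Longrightarrow> \<exists>F c. finite F \<and> F \<subseteq> B1 \<and> x = M.F (\<lambda>d. sm (c d) d) F"
  using B1 unfolding bas_def esum_eq by blast

definition coord :: "'a \<Rightarrow> 'a \<Rightarrow> 'k" where
  "coord x = (let p = (SOME p :: 'a set \<times> ('a \<Rightarrow> 'k). finite (fst p) \<and> fst p \<subseteq> B1 \<and> x = M.F (\<lambda>d. sm (snd p d) d) (fst p))
     in (\<lambda>b. if b \<in> fst p then snd p b else 0))"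

lemma coord_rep: assumes "x \<in> S"
  shows "\<exists>F c. finite F \<and> F \<subseteq> B1 \<and> x = M.F (\<lambda>d. sm (c d) d) F \<and> coord x = (\<lambda>b. if b \<in> F then c b else 0)"
proof -
  let ?P = "\<lambda>p. finite (fst p) \<and> fst p \<subseteq> B1 \<and> x = M.F (\<lambda>d. sm (snd p d) d) (fst p)"
  obtain F c where "finite F \<and> F \<subseteq> B1 \<and> x = M.F (\<lambda>d. sm (c d) d) F" using B1span[OF assms] by blast
  hence "?P (F, c)" by simp
  hence "?P (SOME p. ?P p)" by (rule someI)
  thus ?thesis unfolding coord_def Let_def by blast
qed

lemma uniq:
  assumes F: "finite F" "F \<subseteq> B1" and G: "finite G" "G \<subseteq> B1"
    and eq: "M.F (\<lambda>d. sm (c d) d) F = M.F (\<lambda>d. sm (e d) d) G"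
  shows "(\<lambda>b. if b \<in> F then c b else 0) = (\<lambda>b. if b \<in> G then e b else 0)"
proof -
  define H where "H = F \<union> G"
  define c' where "c' = (\<lambda>b. if b \<in> F then c b else 0)"
  define e' where "e' = (\<lambda>b. if b \<in> G then e b else 0)"
  have H: "finite H" "H \<subseteq> B1" "H \<subseteq> S" using F G B1S unfolding H_def by auto
  have e1: "M.F (\<lambda>d. sm (c' d) d) H = M.F (\<lambda>d. sm (c d) d) F"
    by (rule M.mono_neutral_cong_right) (use H in \<open>auto simp: H_def c'_def intro!: sm_zero\<close>)
  have e2: "M.F (\<lambda>d. sm (e' d) d) H = M.F (\<lambda>d. sm (e d) d) G"
    by (rule M.mono_neutral_cong_right) (use H in \<open>auto simp: H_def e'_def intro!: sm_zero\<close>)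
  define u where "u = M.F (\<lambda>d. sm (c' d) d) H"
  have uS: "u \<in> S" unfolding u_def using lc_S H by blast
  have u2: "M.F (\<lambda>d. sm (e' d) d) H = u" using e1 e2 eq u_def by simp
  have "M.F (\<lambda>b. sm (c' b - e' b) b) H = M.F (\<lambda>b. add (sm (c' b) b) (sm (-1) (sm (e' b) b))) H"
  proof (rule M.cong[OF HOL.refl])
    fix b assume "b \<in> H"
    hence bS: "b \<in> S" using H by auto
    show "sm (c' b - e' b) b = add (sm (c' b) b) (sm (-1) (sm (e' b) b))"
      using add_sm[OF bS, of "c' b" "- e' b"] sm_sm[OF bS, of "-1" "e' b"] by simp
  qed
  also have "\<dots> = add u (sm (-1) (M.F (\<lambda>d. sm (e' d) d) H))"
    by (subst sm_F) (use H in \<open>auto intro: sm_S simp: M.distrib u_def\<close>)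
  also have "\<dots> = z" using u2 neg[OF uS] by simp
  finally have "\<forall>b\<in>H. c' b - e' b = 0" using B1ind[OF H(1,2), of "\<lambda>b. c' b - e' b"] by blast
  hence "c' = e'"
  proof -
    assume h: "\<forall>b\<in>H. c' b - e' b = 0"
    show "c' = e'"
    proof
      fix b show "c' b = e' b"
      proof (cases "b \<in> H")
        case True thus ?thesis using h by simp
      next
        case False thus ?thesis by (simp add: H_def c'_def e'_def)
      qed
    qed
  qed
  thus ?thesis by (simp add: c'_def e'_def)
qed

lemma coord_eq: assumes "finite F" "F \<subseteq> B1" "x = M.F (\<lambda>d. sm (c d) d) F"
  shows "coord x = (\<lambda>b. if b \<in> F then c b else 0)"
proof -
  have "x \<in> S" using assms lc_S B1S by blast
  then obtain G e where "finite G" "G \<subseteq> B1" "x = M.F (\<lambda>d. sm (e d) d) G"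
    "coord x = (\<lambda>b. if b \<in> G then e b else 0)" using coord_rep by blast
  thus ?thesis using uniq[of G F e c] assms by simp
qed

lemma supp: assumes "x \<in> S" shows "finite {b. coord x b \<noteq> 0}" "{b. coord x b \<noteq> 0} \<subseteq> B1"
proof -
  obtain F c where F: "finite F" "F \<subseteq> B1" "coord x = (\<lambda>b. if b \<in> F then c b else 0)"
    using coord_rep[OF assms] by blast
  have "{b. coord x b \<noteq> 0} \<subseteq> F" using F(3) by auto
  thus "finite {b. coord x b \<noteq> 0}" "{b. coord x b \<noteq> 0} \<subseteq> B1" using F finite_subset by auto
qed

lemma lc_ext: assumes x: "x \<in> S" and H: "finite H" "H \<subseteq> B1" "{b. coord x b \<noteq> 0} \<subseteq> H"
  shows "x = M.F (\<lambda>d. sm (coord x d) d) H"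
proof -
  obtain F c where F: "finite F" "F \<subseteq> B1" "x = M.F (\<lambda>d. sm (c d) d) F"
    and cx: "coord x = (\<lambda>b. if b \<in> F then c b else 0)" using coord_rep[OF x] by blast
  have K: "finite (F \<union> H)" "F \<union> H \<subseteq> S" using F H B1S by auto
  have "M.F (\<lambda>d. sm (coord x d) d) (F \<union> H) = M.F (\<lambda>d. sm (c d) d) F"
    by (rule M.mono_neutral_cong_right) (use K in \<open>auto simp: cx intro!: sm_zero\<close>)
  moreover have "M.F (\<lambda>d. sm (coord x d) d) H = M.F (\<lambda>d. sm (coord x d) d) (F \<union> H)"
  proof (rule M.mono_neutral_left)
    show "\<forall>i\<in>F \<union> H - H. sm (coord x i) i = z"
    proof
      fix i assume i: "i \<in> F \<union> H - H"
      hence "coord x i = 0" using H(3) by blast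
      thus "sm (coord x i) i = z" using i K sm_zero by auto
    qed
  qed (use K in auto)
  ultimately show ?thesis using F by simp
qed

lemma coord_add: assumes x: "x \<in> S" and y: "y \<in> S" shows "coord (add x y) = coord x + coord y"
proof -
  define H where "H = {b. coord x b \<noteq> 0} \<union> {b. coord y b \<noteq> 0}"
  have H: "finite H" "H \<subseteq> B1" "H \<subseteq> S" using supp[OF x] supp[OF y] B1S unfolding H_def by auto
  have hx: "x = M.F (\<lambda>d. sm (coord x d) d) H" by (rule lc_ext[OF x H(1,2)]) (simp add: H_def)
  have hy: "y = M.F (\<lambda>d. sm (coord y d) d) H" by (rule lc_ext[OF y H(1,2)]) (simp add: H_def)
  have "add x y = add (M.F (\<lambda>d. sm (coord x d) d) H) (M.F (\<lambda>d. sm (coord y d) d) H)"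
    by (rule arg_cong2[where f=add, OF hx hy])
  also have "\<dots> = M.F (\<lambda>d. add (sm (coord x d) d) (sm (coord y d) d)) H"
    by (rule M.distrib[symmetric])
  also have "\<dots> = M.F (\<lambda>d. sm (coord x d + coord y d) d) H"
  proof (rule M.cong[OF HOL.refl])
    fix d assume "d \<in> H" hence "d \<in> S" using H by auto
    thus "add (sm (coord x d) d) (sm (coord y d) d) = sm (coord x d + coord y d) d"
      by (rule add_sm[symmetric])
  qed
  finally have e: "add x y = M.F (\<lambda>d. sm (coord x d + coord y d) d) H" .
  have "coord (add x y) = (\<lambda>b. if b \<in> H then coord x b + coord y b else 0)"
    by (rule coord_eq[OF H(1,2) e])
  thus ?thesis by (auto simp: fun_eq_iff H_def)
qed

lemma coord_sm: assumes x: "x \<in> S" shows "coord (sm a x) = (\<lambda>b. a * coord x b)"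
proof -
  obtain F c where F: "finite F" "F \<subseteq> B1" "x = M.F (\<lambda>d. sm (c d) d) F"
    and cx: "coord x = (\<lambda>b. if b \<in> F then c b else 0)" using coord_rep[OF x] by blast
  have "sm a x = M.F (\<lambda>d. sm (a * c d) d) F"
  proof -
    have "sm a x = M.F (\<lambda>d. sm a (sm (c d) d)) F"
      using F B1S by (subst F(3), subst sm_F) (auto intro: sm_S)
    also have "\<dots> = M.F (\<lambda>d. sm (a * c d) d) F"
    proof (rule M.cong[OF HOL.refl])
      fix d assume "d \<in> F" hence "d \<in> S" using F B1S by auto
      thus "sm a (sm (c d) d) = sm (a * c d) d" by (rule sm_sm)
    qed
    finally show ?thesis .
  qed
  hence "coord (sm a x) = (\<lambda>b. if b \<in> F then a * c b else 0)" by (rule coord_eq[OF F(1,2)])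
  thus ?thesis by (auto simp: fun_eq_iff cx)
qed

lemma coord_z: "coord z = (\<lambda>b. 0)"
  using coord_eq[of "{}" z] by simp

lemma coord_zero: assumes x: "x \<in> S" "coord x = (\<lambda>b. 0)" shows "x = z"
  using lc_ext[OF x(1), of "{}"] x(2) by simp

lemma coord_inj: "inj_on coord S"
proof (rule inj_onI)
  fix x y assume x: "x \<in> S" and y: "y \<in> S" and eq: "coord x = coord y"
  have "coord (add x (sm (-1) y)) = (\<lambda>b. 0)"
    using coord_add[OF x sm_S[OF y]] coord_sm[OF y] eq by (auto simp: fun_eq_iff)
  hence "add x (sm (-1) y) = z" using coord_zero add_S sm_S x y by blast
  hence "add (add x (sm (-1) y)) y = y" using M.left_neutral by simp
  moreover have "add (add x (sm (-1) y)) y = x"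
  proof -
    have "add (add x (sm (-1) y)) y = add x (add (sm (-1) y) y)" by (rule M.assoc)
    also have "add (sm (-1) y) y = add y (sm (-1) y)" by (rule M.commute)
    also have "\<dots> = z" by (rule neg[OF y])
    finally show ?thesis by simp
  qed
  ultimately show "x = y" by simp
qed

lemma coord_lc: "finite F \<Longrightarrow> F \<subseteq> S \<Longrightarrow>
   coord (M.F (\<lambda>d. sm (c d) d) F) = (\<Sum>b\<in>F. (\<lambda>x. c b * coord b x))"
proof (induction F rule: finite_induct)
  case empty
  then show ?case using coord_z by (simp add: fun_eq_iff)
next
  case (insert b F)
  have "coord (M.F (\<lambda>d. sm (c d) d) (insert b F)) = coord (add (sm (c b) b) (M.F (\<lambda>d. sm (c d) d) F))"
    using insert by simp
  also have "\<dots> = (\<lambda>x. c b * coord b x) + coord (M.F (\<lambda>d. sm (c d) d) F)"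
    using insert by (simp add: coord_add coord_sm sm_S lc_S)
  finally show ?case using insert by simp
qed

lemma other_basis:
  assumes B2: "bas B2"
  shows "W.independent (coord ` B2)" "W.span (coord ` B2) = coord ` S" "inj_on coord B2"
proof -
  have B2S: "B2 \<subseteq> S" using B2 unfolding bas_def by blast
  have B2ind: "\<And>F c d. finite F \<Longrightarrow> F \<subseteq> B2 \<Longrightarrow> M.F (\<lambda>d. sm (c d) d) F = z \<Longrightarrow> d \<in> F \<Longrightarrow> c d = 0"
    using B2 unfolding bas_def esum_eq by blast
  have B2span: "\<And>x. x \<in> S \<Longrightarrow> \<exists>F c. finite F \<and> F \<subseteq> B2 \<and> x = M.F (\<lambda>d. sm (c d) d) F"
    using B2 unfolding bas_def esum_eq by blast
  show inj: "inj_on coord B2" using coord_inj B2S inj_on_subset by blast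
  show "W.independent (coord ` B2)"
    unfolding W.independent_explicit_finite_subsets
  proof (intro allI impI ballI)
    fix T u v assume T: "T \<subseteq> coord ` B2" "finite T" and s: "(\<Sum>v\<in>T. (\<lambda>x. u v * v x)) = 0" and v: "v \<in> T"
    obtain F where F: "F \<subseteq> B2" "inj_on coord F" "T = coord ` F" using T(1) unfolding subset_image_inj by (elim exE conjE) (rule that)
    have fF: "finite F" using T(2) unfolding F(3) finite_image_iff[OF F(2)] .
    have "coord (M.F (\<lambda>d. sm (u (coord d)) d) F) = (\<Sum>b\<in>F. (\<lambda>x. u (coord b) * coord b x))"
      by (rule coord_lc[OF fF]) (use F B2S in blast)
    also have "\<dots> = (\<Sum>v\<in>T. (\<lambda>x. u v * v x))" using F by (simp add: sum.reindex)
    finally have "coord (M.F (\<lambda>d. sm (u (coord d)) d) F) = (\<lambda>b. 0)" using s by (simp add: zero_fun_def)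
    hence "M.F (\<lambda>d. sm (u (coord d)) d) F = z"
      by (intro coord_zero lc_S) (use F B2S in blast)+
    hence h: "\<forall>d\<in>F. u (coord d) = 0" using B2ind[OF fF F(1), of "\<lambda>d. u (coord d)"] by blast
    obtain d where "d \<in> F" "v = coord d" using v F(3) by blast
    thus "u v = 0" using h by simp
  qed
  show "W.span (coord ` B2) = coord ` S"
  proof
    show "W.span (coord ` B2) \<subseteq> coord ` S"
    proof (rule W.span_minimal)
      show "coord ` B2 \<subseteq> coord ` S" using B2S by blast
      show "W.subspace (coord ` S)"
        unfolding W.subspace_def
      proof (intro conjI ballI allI)
        have "0 = coord z" using coord_z by (simp add: zero_fun_def)
        thus "0 \<in> coord ` S" using z_S by (rule image_eqI)
        fix a b assume "a \<in> coord ` S" "b \<in> coord ` S"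
        then obtain x y where "x \<in> S" "y \<in> S" "a = coord x" "b = coord y" by blast
        hence "a + b = coord (add x y)" "add x y \<in> S" using coord_add add_S by auto
        thus "a + b \<in> coord ` S" by (intro image_eqI)
      next
        fix c a assume "a \<in> coord ` S"
        then obtain x where "x \<in> S" "a = coord x" by blast
        hence "(\<lambda>x. c * a x) = coord (sm c x)" "sm c x \<in> S" using coord_sm sm_S by auto
        thus "(\<lambda>x. c * a x) \<in> coord ` S" by (intro image_eqI)
      qed
    qed
    show "coord ` S \<subseteq> W.span (coord ` B2)"
    proof
      fix y assume "y \<in> coord ` S"
      then obtain x where x: "x \<in> S" "y = coord x" by blast
      obtain F c where F: "finite F" "F \<subseteq> B2" "x = M.F (\<lambda>d. sm (c d) d) F" using B2span[OF x(1)] by blast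
      have "y = (\<Sum>b\<in>F. (\<lambda>x. c b * coord b x))" unfolding x(2) F(3)
        by (rule coord_lc[OF F(1)]) (use F B2S in blast)
      also have "\<dots> \<in> W.span (coord ` B2)"
        using F by (intro W.span_sum W.span_scale W.span_base) auto
      finally show "y \<in> W.span (coord ` B2)" .
    qed
  qed
qed

end

context cvs begin

lemma bas_ordIso: assumes B1: "bas B1" and B2: "bas B2" shows "(card_of (B1), card_of (B2)) \<in> ordIso"
proof -
  interpret cvsb S add z sm B1 by unfold_locales (rule B1)
  interpret W: vector_space "\<lambda>(c::'k::field) (f::'a \<Rightarrow> 'k) x. c * f x" by (rule vs_fun)
  note a = other_basis[OF B1]
  note b = other_basis[OF B2]
  have sp: "W.span (coord ` B1) = W.span (coord ` B2)" using a(2) b(2) by (rule trans[OF _ sym])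
  obtain f where "bij_betw f (coord ` B1) (coord ` B2)"
    using W.bij_if_span_eq_span_bases[OF a(1) b(1) sp] by (elim exE)
  hence 1: "(card_of (coord ` B1), card_of (coord ` B2)) \<in> ordIso" by (intro iffD1[OF card_of_ordIso] exI)
  have 2: "(card_of (B1), card_of (coord ` B1)) \<in> ordIso"
    by (rule iffD1[OF card_of_ordIso], rule exI, rule inj_on_imp_bij_betw, rule a(3))
  have 3: "(card_of (B2), card_of (coord ` B2)) \<in> ordIso"
    by (rule iffD1[OF card_of_ordIso], rule exI, rule inj_on_imp_bij_betw, rule b(3))
  show ?thesis by (rule ordIso_transitive[OF ordIso_transitive[OF 2 1] ordIso_symmetric[OF 3]])
qed

end



locale evsv = evsl le add th sm
  for le :: "'x \<Rightarrow> 'x \<Rightarrow> bool" and add :: "'x \<Rightarrow> 'x \<Rightarrow> 'x" and th :: 'x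
    and sm :: "'k::field \<Rightarrow> 'x \<Rightarrow> 'x" +
  fixes scale :: "'k \<Rightarrow> 'v::ab_group_add \<Rightarrow> 'v"
  assumes VS: "vector_space scale"
begin

interpretation V: vector_space scale by (rule VS)
interpretation MX: comm_monoid_set add th using cm by (simp add: comm_monoid_set_def)

lemma cmP: "comm_monoid (prod_add add) (th, 0)"
  by unfold_locales (auto simp: prod_add_def add_ac)

interpretation MP: comm_monoid_set "prod_add add" "(th, 0)" using cmP by (simp add: comm_monoid_set_def)

lemma prod_esum: "MP.F f F = (MX.F (\<lambda>x. fst (f x)) F, \<Sum>x\<in>F. snd (f x))"
proof (cases "finite F")
  case True
  then show ?thesis by (induction F rule: finite_induct) (auto simp: prod_add_def)
qed simp

lemma cvsP: "cvs (prim le \<times> UNIV) (prod_add add) (th, 0) (prod_sm sm scale)"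
  by unfold_locales
    (auto simp: prod_add_def prod_sm_def add_prim sm_prim th_prim sm_add sm_sm sm_distr_prim sm_one
        V.scale_right_distrib V.scale_left_distrib sm_th)

interpretation P: cvs "prim le \<times> UNIV" "prod_add add" "(th, 0)" "prod_sm sm scale" by (rule cvsP)

lemma LP: "q \<in> Lset (prod_le le) (prod_add add) (prod_sm sm scale) b \<longleftrightarrow> fst q \<in> Lset le add sm (fst b)"
  using Lset_prod[of le add sm scale "fst b" "snd b"] by (cases q) auto

lemma basis_fst:
  assumes B: "evs_basis (prod_le le) (prod_add add) (prod_sm sm scale) B"
  shows "evs_basis le add sm (fst ` B)" "inj_on fst B"
proof -
  have g: "B \<subseteq> - prim (prod_le le)"
    "- prim (prod_le le) = (\<Union>b\<in>B. Lset (prod_le le) (prod_add add) (prod_sm sm scale) b)"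
    using B unfolding evs_basis_def generates_def by auto
  have i: "\<And>x y. x \<in> B \<Longrightarrow> y \<in> B \<Longrightarrow> x \<noteq> y \<Longrightarrow>
     \<not> (fst x \<in> Lset le add sm (fst y) \<or> fst y \<in> Lset le add sm (fst x))"
    using B unfolding evs_basis_def orderly_independent_set_def LP by blast
  show "inj_on fst B"
  proof (rule inj_onI, rule ccontr)
    fix x y assume "x \<in> B" "y \<in> B" "fst x = fst y" "x \<noteq> y"
    thus False using i[of x y] L_self by metis
  qed
  have "fst ` B \<subseteq> - prim le" using g(1) unfolding prim_prod by auto
  moreover have "- prim le = (\<Union>b\<in>fst ` B. Lset le add sm b)"
  proof
    show "- prim le \<subseteq> (\<Union>b\<in>fst ` B. Lset le add sm b)"
    proof
      fix x assume "x \<in> - prim le"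
      hence "(x, 0::'v) \<in> - prim (prod_le le)" unfolding prim_prod by auto
      then obtain b where "b \<in> B" "(x, 0::'v) \<in> Lset (prod_le le) (prod_add add) (prod_sm sm scale) b"
        using g(2) by blast
      thus "x \<in> (\<Union>b\<in>fst ` B. Lset le add sm b)" unfolding LP by auto
    qed
    show "(\<Union>b\<in>fst ` B. Lset le add sm b) \<subseteq> - prim le"
    proof
      fix x assume "x \<in> (\<Union>b\<in>fst ` B. Lset le add sm b)"
      then obtain b where "b \<in> B" "x \<in> Lset le add sm (fst b)" by blast
      hence "(x, 0::'v) \<in> Lset (prod_le le) (prod_add add) (prod_sm sm scale) b" using LP[of "(x, 0::'v)" b] by simp
      hence "(x, 0::'v) \<in> (\<Union>b\<in>B. Lset (prod_le le) (prod_add add) (prod_sm sm scale) b)" using \<open>b \<in> B\<close> by blast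
      hence "(x, 0::'v) \<in> - prim (prod_le le)" using g(2) by blast
      thus "x \<in> - prim le" unfolding prim_prod by auto
    qed
  qed
  moreover have "orderly_independent_set le add sm (fst ` B)"
    unfolding orderly_independent_set_def using i by blast
  ultimately show "evs_basis le add sm (fst ` B)"
    unfolding evs_basis_def generates_def by blast
qed

lemma basis_lift:
  assumes B: "evs_basis le add sm B"
  shows "evs_basis (prod_le le) (prod_add add) (prod_sm sm scale) ((\<lambda>x. (x, 0)) ` B)"
proof -
  have g: "B \<subseteq> - prim le" "- prim le = (\<Union>b\<in>B. Lset le add sm b)"
    using B unfolding evs_basis_def generates_def by auto
  have i: "\<And>x y. x \<in> B \<Longrightarrow> y \<in> B \<Longrightarrow> x \<noteq> y \<Longrightarrow>
     \<not> (x \<in> Lset le add sm y \<or> y \<in> Lset le add sm x)"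
    using B unfolding evs_basis_def orderly_independent_set_def by blast
  have "(\<lambda>x. (x, 0)) ` B \<subseteq> - prim (prod_le le)" using g(1) unfolding prim_prod by auto
  moreover have "- prim (prod_le le) = (\<Union>b\<in>(\<lambda>x. (x, 0)) ` B. Lset (prod_le le) (prod_add add) (prod_sm sm scale) b)"
  proof (rule set_eqI)
    fix q :: "'x \<times> 'v"
    have "q \<in> - prim (prod_le le) \<longleftrightarrow> fst q \<in> - prim le" unfolding prim_prod by (cases q) auto
    also have "\<dots> \<longleftrightarrow> (\<exists>b\<in>B. fst q \<in> Lset le add sm b)" using g(2) by blast
    also have "\<dots> \<longleftrightarrow> q \<in> (\<Union>b\<in>(\<lambda>x. (x, 0)) ` B. Lset (prod_le le) (prod_add add) (prod_sm sm scale) b)"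
      by (auto simp: LP)
    finally show "q \<in> - prim (prod_le le) \<longleftrightarrow> q \<in> (\<Union>b\<in>(\<lambda>x. (x, 0)) ` B. Lset (prod_le le) (prod_add add) (prod_sm sm scale) b)" .
  qed
  moreover have "orderly_independent_set (prod_le le) (prod_add add) (prod_sm sm scale) ((\<lambda>x. (x, 0)) ` B)"
    unfolding orderly_independent_set_def LP using i by auto
  ultimately show ?thesis unfolding evs_basis_def generates_def by blast
qed

lemma part1: "has_basis (prod_le le) (prod_add add) (prod_sm sm scale) \<longleftrightarrow> has_basis le add sm"
  unfolding has_basis_def using basis_fst basis_lift by blast

lemma part2:
  assumes B: "evs_basis (prod_le le) (prod_add add) (prod_sm sm scale) B" and B': "evs_basis le add sm B'"
  shows "(card_of B, card_of B') \<in> ordIso"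
proof -
  have "(card_of B, card_of (fst ` B)) \<in> ordIso"
    using basis_fst(2)[OF B] card_of_ordIso inj_on_imp_bij_betw by blast
  moreover have "(card_of (fst ` B), card_of B') \<in> ordIso"
    using basis_bij[OF basis_fst(1)[OF B] B'] card_of_ordIso by blast
  ultimately show ?thesis using ordIso_transitive by blast
qed

end



context evsv begin

interpretation V: vector_space scale by (rule VS)
interpretation MX: comm_monoid_set add th using cm by (simp add: comm_monoid_set_def)
interpretation MP: comm_monoid_set "prod_add add" "(th, 0)" using cmP by (simp add: comm_monoid_set_def)
interpretation P: cvs "prim le \<times> UNIV" "prod_add add" "(th, 0)" "prod_sm sm scale" by (rule cvsP)

lemma esumX: "esum add th = MX.F" by (simp add: esum_def)
lemma esumP: "esum (prod_add add) (th, 0) = MP.F" by (simp add: esum_def)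

lemma part3:
  assumes C: "prim_basis (prod_le le) (prod_add add) (th, 0) (prod_sm sm scale) C"
    and D: "prim_basis le add th sm D"
    and Ei: "\<not> module.dependent scale E" and Es: "module.span scale E = UNIV"
  shows "(card_of C, BNF_Cardinal_Arithmetic.csum (card_of D) (card_of E)) \<in> ordIso"
proof -
  have CP: "P.bas C" using C unfolding P.bas_def prim_basis_def prim_prod by blast
  have DX: "D \<subseteq> prim le" using D unfolding prim_basis_def by blast
  have Dind: "\<And>F c d. finite F \<Longrightarrow> F \<subseteq> D \<Longrightarrow> MX.F (\<lambda>d. sm (c d) d) F = th \<Longrightarrow> d \<in> F \<Longrightarrow> c d = 0"
    using D unfolding prim_basis_def esumX by blast
  have Dspan: "\<And>x. x \<in> prim le \<Longrightarrow> \<exists>F c. finite F \<and> F \<subseteq> D \<and> x = MX.F (\<lambda>d. sm (c d) d) F"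
    using D unfolding prim_basis_def esumX by blast
  have thD: "th \<notin> D"
  proof
    assume "th \<in> D"
    hence "(\<lambda>_. 1::'k) th = 0" using Dind[of "{th}" "\<lambda>_. 1"] by (simp add: sm_one)
    thus False by simp
  qed
  have zE: "0 \<notin> E" using Ei V.dependent_zero by blast
  have Eind: "\<And>K u e. finite K \<Longrightarrow> K \<subseteq> E \<Longrightarrow> (\<Sum>v\<in>K. scale (u v) v) = 0 \<Longrightarrow> e \<in> K \<Longrightarrow> u e = 0"
    using Ei unfolding V.dependent_explicit by blast
  define D' where "D' = (\<lambda>d. (d, 0)) ` D \<union> (\<lambda>e. (th, e)) ` E"
  have "P.bas D'"
    unfolding P.bas_def esumP
  proof (intro conjI allI impI ballI)
    show "D' \<subseteq> prim le \<times> UNIV" using DX th_prim unfolding D'_def by auto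
  next
    fix F c q assume F: "finite F" "F \<subseteq> D'" and s: "MP.F (\<lambda>d. prod_sm sm scale (c d) d) F = (th, 0)"
      and q: "q \<in> F"
    have s1: "MX.F (\<lambda>x. sm (c x) (fst x)) F = th" and s2: "(\<Sum>x\<in>F. scale (c x) (snd x)) = 0"
      using s unfolding prod_esum by (auto simp: prod_sm_def)
    define G1 where "G1 = {d \<in> D. (d, 0) \<in> F}"
    define G2 where "G2 = {e \<in> E. (th, e) \<in> F}"
    have "G1 \<subseteq> fst ` F"
    proof
      fix d assume "d \<in> G1" hence "(d, 0) \<in> F" by (simp add: G1_def)
      thus "d \<in> fst ` F" by (rule image_eqI[rotated]) simp
    qed
    hence fG1: "finite G1" using F(1) finite_subset by blast
    have "G2 \<subseteq> snd ` F"
    proof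
      fix d assume "d \<in> G2" hence "(th, d) \<in> F" by (simp add: G2_def)
      thus "d \<in> snd ` F" by (rule image_eqI[rotated]) simp
    qed
    hence fG2: "finite G2" using F(1) finite_subset by blast
    have "MX.F (\<lambda>x. sm (c x) (fst x)) F = MX.F (\<lambda>x. sm (c x) (fst x)) ((\<lambda>d. (d, 0)) ` G1)"
    proof (rule MX.mono_neutral_right[OF F(1)])
      show "(\<lambda>d. (d, 0)) ` G1 \<subseteq> F" unfolding G1_def by auto
      show "\<forall>i\<in>F - (\<lambda>d. (d, 0)) ` G1. sm (c i) (fst i) = th"
        using F(2) unfolding D'_def G1_def by (auto simp: sm_th)
    qed
    also have "\<dots> = MX.F (\<lambda>d. sm (c (d, 0)) d) G1"
      by (subst MX.reindex) (auto simp: inj_on_def comp_def)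
    finally have h1: "\<forall>d\<in>G1. c (d, 0) = 0"
      using s1 Dind[OF fG1, of "\<lambda>d. c (d, 0)"] unfolding G1_def by auto
    have "(\<Sum>x\<in>F. scale (c x) (snd x)) = (\<Sum>x\<in>(\<lambda>e. (th, e)) ` G2. scale (c x) (snd x))"
    proof (rule sum.mono_neutral_right[OF F(1)])
      show "(\<lambda>e. (th, e)) ` G2 \<subseteq> F" unfolding G2_def by auto
      show "\<forall>i\<in>F - (\<lambda>e. (th, e)) ` G2. scale (c i) (snd i) = 0"
        using F(2) unfolding D'_def G2_def by auto
    qed
    also have "\<dots> = (\<Sum>e\<in>G2. scale (c (th, e)) e)"
      by (subst sum.reindex) (auto simp: inj_on_def comp_def)
    finally have h2: "\<forall>e\<in>G2. c (th, e) = 0"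
      using s2 Eind[OF fG2, of "\<lambda>e. c (th, e)"] unfolding G2_def by auto
    show "c q = 0" using q F(2) h1 h2 unfolding D'_def G1_def G2_def by auto
  next
    fix q :: "'x \<times> 'v" assume "q \<in> prim le \<times> UNIV"
    then obtain p v where q: "q = (p, v)" "p \<in> prim le" by auto
    obtain G c where G: "finite G" "G \<subseteq> D" "p = MX.F (\<lambda>d. sm (c d) d) G" using Dspan[OF q(2)] by blast
    have "v \<in> V.span E" using Es by simp
    then obtain K u where K: "finite K" "K \<subseteq> E" "v = (\<Sum>e\<in>K. scale (u e) e)"
      unfolding V.span_explicit by blast
    define F where "F = (\<lambda>d. (d, 0)) ` G \<union> (\<lambda>e. (th, e)) ` K"
    define c' where "c' = (\<lambda>x::'x \<times> 'v. if snd x = 0 then c (fst x) else u (snd x))"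
    have fF: "finite F" using G K unfolding F_def by auto
    have "MX.F (\<lambda>x. sm (c' x) (fst x)) F = MX.F (\<lambda>x. sm (c' x) (fst x)) ((\<lambda>d. (d, 0)) ` G)"
      by (rule MX.mono_neutral_right[OF fF]) (auto simp: F_def sm_th)
    also have "\<dots> = MX.F (\<lambda>d. sm (c d) d) G"
      by (subst MX.reindex) (auto simp: inj_on_def comp_def c'_def)
    finally have e1: "MX.F (\<lambda>x. sm (c' x) (fst x)) F = p" using G by simp
    have "(\<Sum>x\<in>F. scale (c' x) (snd x)) = (\<Sum>x\<in>(\<lambda>e. (th, e)) ` K. scale (c' x) (snd x))"
      by (rule sum.mono_neutral_right[OF fF]) (auto simp: F_def)
    also have "\<dots> = (\<Sum>e\<in>K. scale (u e) e)"
    proof (subst sum.reindex)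
      show "inj_on (\<lambda>e. (th, e)) K" by (auto simp: inj_on_def)
      show "sum ((\<lambda>x. scale (c' x) (snd x)) \<circ> (\<lambda>e. (th, e))) K = (\<Sum>e\<in>K. scale (u e) e)"
      proof (rule sum.cong[OF HOL.refl])
        fix e assume "e \<in> K" hence "e \<noteq> 0" using K zE by auto
        thus "((\<lambda>x. scale (c' x) (snd x)) \<circ> (\<lambda>e. (th, e))) e = scale (u e) e" by (simp add: c'_def)
      qed
    qed
    finally have e2: "(\<Sum>x\<in>F. scale (c' x) (snd x)) = v" using K by simp
    show "\<exists>F c. finite F \<and> F \<subseteq> D' \<and> q = MP.F (\<lambda>d. prod_sm sm scale (c d) d) F"
    proof (intro exI conjI)
      show "finite F" by (rule fF)
      show "F \<subseteq> D'" using G K unfolding F_def D'_def by auto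
      show "q = MP.F (\<lambda>d. prod_sm sm scale (c' d) d) F"
        unfolding prod_esum using e1 e2 q by (simp add: prod_sm_def)
    qed
  qed
  hence "(card_of C, card_of D') \<in> ordIso" using P.bas_ordIso CP by blast
  moreover have "bij_betw (case_sum (\<lambda>d. (d, 0)) (\<lambda>e. (th, e))) (D <+> E) D'"
  proof (rule bij_betwI')
    fix x y assume "x \<in> D <+> E" "y \<in> D <+> E"
    thus "(case_sum (\<lambda>d. (d, 0)) (\<lambda>e. (th, e)) x = case_sum (\<lambda>d. (d, 0)) (\<lambda>e. (th, e)) y) = (x = y)"
      using thD zE by auto
  next
    fix x assume "x \<in> D <+> E"
    thus "case_sum (\<lambda>d. (d, 0)) (\<lambda>e. (th, e)) x \<in> D'" unfolding D'_def by auto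
  next
    fix y assume "y \<in> D'"
    thus "\<exists>x\<in>D <+> E. y = case_sum (\<lambda>d. (d, 0)) (\<lambda>e. (th, e)) x" unfolding D'_def
    proof (elim UnE imageE)
      fix d assume "d \<in> D" "y = (d, 0)"
      thus ?thesis by (intro bexI[of _ "Inl d"]) auto
    next
      fix e assume "e \<in> E" "y = (th, e)"
      thus ?thesis by (intro bexI[of _ "Inr e"]) auto
    qed
  qed
  hence "(card_of (D <+> E), card_of D') \<in> ordIso" using card_of_ordIso by blast
  ultimately have "(card_of C, card_of (D <+> E)) \<in> ordIso"
    using ordIso_transitive ordIso_symmetric by blast
  thus ?thesis by (simp add: csum_def Field_card_of)
qed

lemma thm8: "thm8_conclusion le add th sm scale"
  unfolding thm8_conclusion_def using part1 part2 part3 by blast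

end


theorem mainTheorem8:
  fixes leR :: "'x \<Rightarrow> 'x \<Rightarrow> bool" and addR :: "'x \<Rightarrow> 'x \<Rightarrow> 'x" and thR :: 'x
    and smR :: "real \<Rightarrow> 'x \<Rightarrow> 'x" and scR :: "real \<Rightarrow> 'v::ab_group_add \<Rightarrow> 'v"
    and leC :: "'y \<Rightarrow> 'y \<Rightarrow> bool" and addC :: "'y \<Rightarrow> 'y \<Rightarrow> 'y" and thC :: 'y
    and smC :: "complex \<Rightarrow> 'y \<Rightarrow> 'y" and scC :: "complex \<Rightarrow> 'w::ab_group_add \<Rightarrow> 'w"
  shows "(evs leR addR thR smR \<and> vector_space scR \<longrightarrow> thm8_conclusion leR addR thR smR scR)
       \<and> (evs leC addC thC smC \<and> vector_space scC \<longrightarrow> thm8_conclusion leC addC thC smC scC)"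
proof (intro conjI impI)
  assume a: "evs leR addR thR smR \<and> vector_space scR"
  have a1: "evs leR addR thR smR" and a2: "vector_space scR" using a by auto
  interpret R: evsv leR addR thR smR scR by (rule evsv.intro[OF evsl.intro[OF a1] evsv_axioms.intro[OF a2]])
  show "thm8_conclusion leR addR thR smR scR" by (rule R.thm8)
next
  assume a: "evs leC addC thC smC \<and> vector_space scC"
  have a1: "evs leC addC thC smC" and a2: "vector_space scC" using a by auto
  interpret Cx: evsv leC addC thC smC scC by (rule evsv.intro[OF evsl.intro[OF a1] evsv_axioms.intro[OF a2]])
  show "thm8_conclusion leC addC thC smC scC" by (rule Cx.thm8)
qed

end
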